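(* Let $\mathscr{H}$ be a complex Hilbert space and let $N(\cdot)$ be a norm on $\mathbb{B}(\mathscr{H})$. Then the function $w_{(N,e)}(\cdot,\cdot):\mathbb{B}^2(\mathscr{H})\to[0,\infty)$ defined by $$w_{(N,e)}(B,C)=\sup_{\lambda_1,\lambda_2\in\mathbb{C},\ |\lambda_1|^2+|\lambda_2|^2\leq 1}\ \sup_{\theta\in\mathbb{R}} N\left(\Re\left(e^{i\theta}(\lambda_1B+\lambda_2C)\right)\right)$$ is a norm on $\mathbb{B}^2(\mathscr{H})=\mathbb{B}(\mathscr{H})\times\mathbb{B}(\mathscr{H})$ (with componentwise addition and scalar multiplication).
   Context: $\mathbb{B}(\mathscr{H})$ denotes the algebra of bounded linear operators on $\mathscr{H}$. For $T\in\mathbb{B}(\mathscr{H})$, $\Re(T)=\frac12(T+T^* )$. *)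

theory Defs
  imports Complex_Main
begin

text \<open>Convention: the inner product is conjugate-linear in the first and linear in the
  second argument (the choice is irrelevant for the statement).\<close>

class chilbert = ab_group_add +
  fixes scaleC :: "complex \<Rightarrow> 'a \<Rightarrow> 'a"  (infixr "*\<^sub>C" 75)
    and cinner :: "'a \<Rightarrow> 'a \<Rightarrow> complex"
  assumes scaleC_add_right: "a *\<^sub>C (x + y) = a *\<^sub>C x + a *\<^sub>C y"
    and scaleC_add_left: "(a + b) *\<^sub>C x = a *\<^sub>C x + b *\<^sub>C x"
    and scaleC_scaleC: "a *\<^sub>C (b *\<^sub>C x) = (a * b) *\<^sub>C x"
    and scaleC_one: "1 *\<^sub>C x = x"
    and cinner_commute: "cinner x y = cnj (cinner y x)"
    and cinner_add_left: "cinner (x + y) z = cinner x z + cinner y z"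
    and cinner_scaleC_left: "cinner (a *\<^sub>C x) y = cnj a * cinner x y"
    and cinner_ge_zero: "0 \<le> Re (cinner x x)"
    and cinner_eq_zero_iff: "cinner x x = 0 \<longleftrightarrow> x = 0"
    and chilbert_complete:
      "(\<forall>e>0. \<exists>M. \<forall>m\<ge>M. \<forall>n\<ge>M. sqrt (Re (cinner ((X::nat \<Rightarrow> 'a) m - X n) (X m - X n))) < e)
        \<Longrightarrow> (\<exists>L. \<forall>e>0. \<exists>M. \<forall>n\<ge>M. sqrt (Re (cinner (X n - L) (X n - L))) < e)"

definition cnorm :: "'a::chilbert \<Rightarrow> real" where
  "cnorm x = sqrt (Re (cinner x x))"

definition bounded_op :: "('a::chilbert \<Rightarrow> 'a) \<Rightarrow> bool" where
  "bounded_op T \<longleftrightarrow>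
     (\<forall>x y. T (x + y) = T x + T y) \<and> (\<forall>a x. T (a *\<^sub>C x) = a *\<^sub>C T x) \<and>
     (\<exists>K. \<forall>x. cnorm (T x) \<le> K * cnorm x)"

definition adjoint :: "('a::chilbert \<Rightarrow> 'a) \<Rightarrow> ('a \<Rightarrow> 'a)" where
  "adjoint T = (THE S. \<forall>x y. cinner (T x) y = cinner x (S y))"

definition op_Re :: "('a::chilbert \<Rightarrow> 'a) \<Rightarrow> ('a \<Rightarrow> 'a)" where
  "op_Re T = (\<lambda>x. (1/2) *\<^sub>C (T x + adjoint T x))"

definition is_op_norm :: "(('a::chilbert \<Rightarrow> 'a) \<Rightarrow> real) \<Rightarrow> bool" where
  "is_op_norm N \<longleftrightarrow>
     (\<forall>T. bounded_op T \<longrightarrow> 0 \<le> N T \<and> (N T = 0 \<longleftrightarrow> T = (\<lambda>x. 0))) \<and>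
     (\<forall>c T. bounded_op T \<longrightarrow> N (\<lambda>x. c *\<^sub>C T x) = cmod c * N T) \<and>
     (\<forall>S T. bounded_op S \<longrightarrow> bounded_op T \<longrightarrow> N (\<lambda>x. S x + T x) \<le> N S + N T)"

definition wNe_set :: "(('a::chilbert \<Rightarrow> 'a) \<Rightarrow> real) \<Rightarrow> ('a \<Rightarrow> 'a) \<Rightarrow> ('a \<Rightarrow> 'a) \<Rightarrow> real set" where
  "wNe_set N B C =
     {N (op_Re (\<lambda>x. exp (\<i> * of_real \<theta>) *\<^sub>C (l1 *\<^sub>C B x + l2 *\<^sub>C C x))) | l1 l2 \<theta>.
        (cmod l1)\<^sup>2 + (cmod l2)\<^sup>2 \<le> 1}"

definition wNe :: "(('a::chilbert \<Rightarrow> 'a) \<Rightarrow> real) \<Rightarrow> ('a \<Rightarrow> 'a) \<Rightarrow> ('a \<Rightarrow> 'a) \<Rightarrow> real" where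
  "wNe N B C = Sup (wNe_set N B C)"

end

theory Submission imports Defs begin

lemma scaleC_zero_right[simp]: "a *\<^sub>C (0::'a::chilbert) = 0"
proof -
  have "a *\<^sub>C (0::'a) = a *\<^sub>C 0 + a *\<^sub>C 0" by (metis scaleC_add_right add_0)
  thus ?thesis by simp
qed

lemma scaleC_zero_left[simp]: "0 *\<^sub>C (x::'a::chilbert) = 0"
proof -
  have "0 *\<^sub>C (x::'a) = 0 *\<^sub>C x + 0 *\<^sub>C x" by (metis scaleC_add_left add_0)
  thus ?thesis by simp
qed

lemma scaleC_minus_right: "a *\<^sub>C (- x) = - (a *\<^sub>C (x::'a::chilbert))"
proof -
  have "a *\<^sub>C x + a *\<^sub>C (- x) = a *\<^sub>C (x + - x)" by (simp only: scaleC_add_right)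
  also have "\<dots> = 0" by simp
  finally show ?thesis using add.inverse_unique by metis
qed

lemma scaleC_minus_left: "(- a) *\<^sub>C x = - (a *\<^sub>C (x::'a::chilbert))"
proof -
  have "a *\<^sub>C x + (- a) *\<^sub>C x = (a + - a) *\<^sub>C x" by (simp only: scaleC_add_left)
  also have "\<dots> = 0" by simp
  finally show ?thesis using add.inverse_unique by metis
qed

lemma scaleC_diff_right: "a *\<^sub>C (x - y) = a *\<^sub>C x - a *\<^sub>C (y::'a::chilbert)"
  by (simp only: diff_conv_add_uminus scaleC_add_right scaleC_minus_right)

lemma scaleC_diff_left: "(a - b) *\<^sub>C x = a *\<^sub>C x - b *\<^sub>C (x::'a::chilbert)"
  by (simp only: diff_conv_add_uminus scaleC_add_left scaleC_minus_left)

lemma scaleC_eq_0: "a *\<^sub>C x = 0 \<longleftrightarrow> a = 0 \<or> (x::'a::chilbert) = 0"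
proof
  assume h: "a *\<^sub>C x = 0"
  show "a = 0 \<or> x = 0"
  proof (cases "a = 0")
    case False
    have "x = (inverse a * a) *\<^sub>C x" using False by (simp add: scaleC_one)
    also have "\<dots> = inverse a *\<^sub>C (a *\<^sub>C x)" by (simp add: scaleC_scaleC)
    also have "\<dots> = 0" using h by simp
    finally show ?thesis by simp
  qed simp
qed auto

lemma cinner_zero_left[simp]: "cinner (0::'a::chilbert) y = 0"
proof -
  have "cinner (0::'a) y = cinner 0 y + cinner 0 y" by (metis cinner_add_left add_0)
  thus ?thesis by simp
qed

lemma cinner_zero_right[simp]: "cinner x (0::'a::chilbert) = 0"
  by (metis cinner_commute cinner_zero_left complex_cnj_zero)

lemma cinner_add_right: "cinner x (y + z) = cinner x y + cinner x (z::'a::chilbert)"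
  by (metis cinner_commute cinner_add_left complex_cnj_add)

lemma cinner_scaleC_right: "cinner x (a *\<^sub>C y) = a * cinner x (y::'a::chilbert)"
  by (metis cinner_commute cinner_scaleC_left complex_cnj_mult complex_cnj_cnj)

lemma cinner_minus_left: "cinner (- x) y = - cinner x (y::'a::chilbert)"
  by (metis add.right_inverse cinner_add_left cinner_zero_left eq_neg_iff_add_eq_0)

lemma cinner_minus_right: "cinner x (- y) = - cinner x (y::'a::chilbert)"
  by (metis add.right_inverse cinner_add_right cinner_zero_right eq_neg_iff_add_eq_0)

lemma cinner_diff_left: "cinner (x - y) z = cinner x z - cinner y (z::'a::chilbert)"
  by (simp only: diff_conv_add_uminus cinner_add_left cinner_minus_left)

lemma cinner_diff_right: "cinner x (y - z) = cinner x y - cinner x (z::'a::chilbert)"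
  by (simp only: diff_conv_add_uminus cinner_add_right cinner_minus_right)

lemma cinner_self_real: "cinner x x = complex_of_real (Re (cinner x (x::'a::chilbert)))"
proof -
  have "Im (cinner x x) = Im (cnj (cinner x x))" by (metis cinner_commute)
  hence "Im (cinner x x) = 0" by simp
  thus ?thesis by (simp add: complex_eqI)
qed

definition qn :: "'a::chilbert \<Rightarrow> real" where "qn x = Re (cinner x x)"

lemma qn_ge0: "0 \<le> qn x" by (simp add: qn_def cinner_ge_zero)

lemma qn_eq0: "qn x = 0 \<longleftrightarrow> x = 0"
  by (metis cinner_eq_zero_iff cinner_self_real of_real_0 qn_def zero_complex.sel(1))

lemma cnorm_qn: "cnorm x = sqrt (qn x)" by (simp add: cnorm_def qn_def)

lemma qn_expand: "qn (x + t *\<^sub>C y) = qn x + 2 * Re (t * cinner x y) + (cmod t)^2 * qn (y::'a::chilbert)"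
proof -
  have "cinner (x + t *\<^sub>C y) (x + t *\<^sub>C y) = cinner x x + t * cinner x y + cnj t * cinner y x + cnj t * t * cinner y y"
    by (simp add: cinner_add_left cinner_add_right cinner_scaleC_left cinner_scaleC_right algebra_simps)
  moreover have "Re (cnj t * cinner y x) = Re (t * cinner x y)"
    by (metis cinner_commute complex_cnj_cnj complex_cnj_mult cnj.sel(1) mult.commute) 
  moreover have "Re (cnj t * t * cinner y y) = (cmod t)^2 * qn y"
  proof -
    have "cnj t * t * cinner y y = of_real ((cmod t)^2 * qn y)"
      by (metis cinner_self_real complex_norm_square mult.commute of_real_mult qn_def)
    thus ?thesis by simp
  qed
  ultimately show ?thesis by (simp add: qn_def)
qed

lemma qn_scale: "qn (t *\<^sub>C x) = (cmod t)^2 * qn (x::'a::chilbert)"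
  using qn_expand[of 0 t x] by (simp add: qn_def)

lemma qn_minus: "qn (- x) = qn (x::'a::chilbert)"
  by (simp add: qn_def cinner_minus_left cinner_minus_right)

lemma cauchy_schwarz: "(cmod (cinner x y))^2 \<le> qn x * qn (y::'a::chilbert)"
proof (cases "y = 0")
  case True thus ?thesis by (simp add: qn_def)
next
  case False
  define q where "q = qn y"
  have q: "q > 0" using False qn_eq0 qn_ge0 q_def by (metis order_le_less)
  define a where "a = cinner x y"
  define t where "t = - cnj a / of_real q"
  have "0 \<le> qn (x + t *\<^sub>C y)" by (rule qn_ge0)
  also have "\<dots> = qn x + 2 * Re (t * a) + (cmod t)^2 * q" by (simp add: qn_expand a_def q_def)
  also have "t * a = - of_real ((cmod a)^2 / q)"
  proof -
    have n: "cnj a * a = of_real ((cmod a)^2)" by (metis complex_norm_square mult.commute)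
    have "t * a = - (cnj a * a) / of_real q" by (simp add: t_def)
    also have "\<dots> = - of_real ((cmod a)^2 / q)" by (simp only: n of_real_divide) simp
    finally show ?thesis .
  qed
  also have "(cmod t)^2 = (cmod a)^2 / q^2" using q by (simp add: t_def norm_divide power_divide)
  finally have "0 \<le> qn x - 2 * ((cmod a)^2 / q) + (cmod a)^2 / q^2 * q" by simp
  also have "(cmod a)^2 / q^2 * q = (cmod a)^2 / q" using q by (simp add: power2_eq_square)
  finally have "(cmod a)^2 / q \<le> qn x" by simp
  thus ?thesis using q by (simp add: a_def q_def pos_divide_le_eq)
qed

lemma cs_norm: "cmod (cinner x y) \<le> cnorm x * cnorm (y::'a::chilbert)"
proof -
  have "cmod (cinner x y) = sqrt ((cmod (cinner x y))^2)" by simp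
  also have "\<dots> \<le> sqrt (qn x * qn y)" using cauchy_schwarz real_sqrt_le_mono by blast
  finally show ?thesis by (simp add: cnorm_qn real_sqrt_mult)
qed

lemma cnorm_ge0: "0 \<le> cnorm x" by (simp add: cnorm_def cinner_ge_zero)

lemma cnorm_triangle: "cnorm (x + y) \<le> cnorm x + cnorm (y::'a::chilbert)"
proof -
  have "qn (x + y) = qn x + 2 * Re (cinner x y) + qn y" using qn_expand[of x 1 y] by (simp add: scaleC_one)
  also have "Re (cinner x y) \<le> cnorm x * cnorm y" using cs_norm complex_Re_le_cmod order_trans by blast
  also have "qn x = (cnorm x)^2" by (simp add: cnorm_qn qn_ge0)
  also have "qn y = (cnorm y)^2" by (simp add: cnorm_qn qn_ge0)
  finally have "qn (x + y) \<le> (cnorm x + cnorm y)^2" by (simp add: power2_sum)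
  hence "sqrt (qn (x+y)) \<le> sqrt ((cnorm x + cnorm y)^2)" using real_sqrt_le_mono by blast
  thus ?thesis using cnorm_ge0[of x] cnorm_ge0[of y] by (simp add: cnorm_qn)
qed

lemma cnorm_scale: "cnorm (t *\<^sub>C x) = cmod t * cnorm (x::'a::chilbert)"
  by (simp add: cnorm_qn qn_scale real_sqrt_mult)

lemma cnorm_minus: "cnorm (- x) = cnorm (x::'a::chilbert)"
  by (simp add: cnorm_qn qn_minus)

lemma parallelogram: "qn (x + y) + qn (x - y) = 2 * qn x + 2 * qn (y::'a::chilbert)"
proof -
  have "qn (x + y) = qn x + 2 * Re (cinner x y) + qn y" using qn_expand[of x 1 y] by (simp add: scaleC_one)
  moreover have e: "qn (x - y) = qn (x + (-1) *\<^sub>C y)" by (simp add: scaleC_minus_left scaleC_one)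
  moreover have "qn (x + (-1) *\<^sub>C y) = qn x - 2 * Re (cinner x y) + qn y" using qn_expand[of x "-1" y] by simp
  ultimately show ?thesis by linarith
qed


lemma inv_suc_le: "M \<le> n \<Longrightarrow> 0 < M \<Longrightarrow> inverse (real (Suc n)) \<le> inverse (real M)"
  by (simp add: le_imp_inverse_le)

lemma riesz:
  fixes g :: "'a::chilbert \<Rightarrow> complex"
  assumes add: "\<And>x y. g (x + y) = g x + g y"
    and scal: "\<And>a x. g (a *\<^sub>C x) = a * g x"
    and bnd: "\<And>x. cmod (g x) \<le> K * cnorm x"
  shows "\<exists>z. \<forall>x. g x = cinner z x"
proof (cases "\<forall>x. g x = 0")
  case True thus ?thesis by (intro exI[of _ 0]) simp
next
  case False
  then obtain x1 where x1: "g x1 \<noteq> 0" by blast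
  have g0: "g 0 = 0" using scal[of 0 0] by simp
  have gdiff: "g (x - y) = g x - g y" for x y using add[of "x - y" y] by simp
  define A where "A = {x. g x = 1}"
  define x0 where "x0 = inverse (g x1) *\<^sub>C x1"
  have x0A: "x0 \<in> A" using x1 by (simp add: A_def x0_def scal)
  define d where "d = Inf (qn ` A)"
  have bdd: "bdd_below (qn ` A)" unfolding bdd_below_def using qn_ge0 by auto
  have d_le: "d \<le> qn x" if "x \<in> A" for x using cInf_lower[OF imageI[OF that] bdd] d_def by simp
  have d0: "0 \<le> d" unfolding d_def using x0A qn_ge0 by (intro cInf_greatest) auto
  have "\<exists>x\<in>A. qn x < d + inverse (real (Suc n))" for n
  proof -
    have "Inf (qn ` A) < d + inverse (real (Suc n))" unfolding d_def by simp
    from cInf_lessD[OF _ this] x0A show ?thesis by auto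
  qed
  then obtain X where X: "\<And>n. X n \<in> A" "\<And>n. qn (X n) < d + inverse (real (Suc n))" by metis
  have cauchy: "qn (X m - X n) \<le> 2 * inverse (real (Suc m)) + 2 * inverse (real (Suc n))" for m n
  proof -
    define h where "h = (1/2) *\<^sub>C (X m + X n)"
    have hA: "h \<in> A" using X(1)[of m] X(1)[of n] by (simp add: A_def h_def scal add)
    have "X m + X n = (2::complex) *\<^sub>C h" by (simp add: h_def scaleC_scaleC scaleC_one)
    hence "qn (X m + X n) = 4 * qn h" by (simp add: qn_scale)
    hence "qn (X m + X n) \<ge> 4 * d" using d_le[OF hA] by simp
    with parallelogram[of "X m" "X n"] X(2)[of m] X(2)[of n] show ?thesis by linarith
  qed
  have "\<forall>e>0. \<exists>M. \<forall>m\<ge>M. \<forall>n\<ge>M. sqrt (Re (cinner (X m - X n) (X m - X n))) < e"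
  proof (intro allI impI)
    fix e :: real assume e: "e > 0"
    obtain M where M: "M > 0" "inverse (real M) < e^2 / 4" using ex_inverse_of_nat_less[of "e^2/4"] e by auto
    have "sqrt (Re (cinner (X m - X n) (X m - X n))) < e" if "m \<ge> M" "n \<ge> M" for m n
    proof -
      have "qn (X m - X n) \<le> 4 * inverse (real M)"
        using cauchy[of m n] inv_suc_le[OF that(1) M(1)] inv_suc_le[OF that(2) M(1)] by linarith
      also have "\<dots> < e^2" using M(2) by simp
      finally have "sqrt (qn (X m - X n)) < sqrt (e^2)" by (simp only: real_sqrt_less_iff)
      thus ?thesis using e by (simp add: qn_def)
    qed
    thus "\<exists>M. \<forall>m\<ge>M. \<forall>n\<ge>M. sqrt (Re (cinner (X m - X n) (X m - X n))) < e" by blast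
  qed
  from chilbert_complete[OF this] obtain L where
    Lc: "\<And>e. e > 0 \<Longrightarrow> \<exists>M. \<forall>n\<ge>M. cnorm (X n - L) < e" by (auto simp: cnorm_def)
  have gL: "g L = 1"
  proof (rule ccontr)
    assume "g L \<noteq> 1"
    define \<delta> where "\<delta> = cmod (g L - 1)"
    have dp: "\<delta> > 0" using \<open>g L \<noteq> 1\<close> by (simp add: \<delta>_def)
    obtain M where M: "\<forall>n\<ge>M. cnorm (X n - L) < \<delta> / (\<bar>K\<bar> + 1)" using Lc[of "\<delta> / (\<bar>K\<bar> + 1)"] dp by auto
    have c: "cnorm (X M - L) < \<delta> / (\<bar>K\<bar> + 1)" using M by simp
    have "g (X M - L) = 1 - g L" using X(1)[of M] by (simp add: gdiff A_def)
    hence "\<delta> = cmod (g (X M - L))" by (simp add: \<delta>_def norm_minus_commute)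
    also have "\<dots> \<le> K * cnorm (X M - L)" by (rule bnd)
    also have "\<dots> \<le> \<bar>K\<bar> * cnorm (X M - L)" by (intro mult_right_mono abs_ge_self cnorm_ge0)
    also have "\<dots> \<le> \<bar>K\<bar> * (\<delta> / (\<bar>K\<bar> + 1))" using c by (intro mult_left_mono) simp_all
    also have "\<dots> < \<delta>" using dp by (simp add: field_simps)
    finally show False by simp
  qed
  have qL: "qn L \<le> d"
  proof (rule ccontr)
    assume "\<not> qn L \<le> d"
    define \<epsilon> where "\<epsilon> = sqrt (qn L) - sqrt d"
    have ep: "\<epsilon> > 0" using \<open>\<not> qn L \<le> d\<close> by (simp add: \<epsilon>_def)
    obtain M where M: "\<forall>n\<ge>M. cnorm (X n - L) < \<epsilon>/2" using Lc[of "\<epsilon>/2"] ep by auto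
    obtain N where N: "N > 0" "inverse (real N) < (\<epsilon>/2)^2" using ex_inverse_of_nat_less[of "(\<epsilon>/2)^2"] ep by auto
    define n where "n = max M N"
    have c1: "cnorm (L - X n) < \<epsilon>/2" using M cnorm_minus[of "X n - L"] by (simp add: n_def)
    have "inverse (real (Suc n)) \<le> inverse (real N)" by (rule inv_suc_le) (auto simp: n_def N(1))
    hence i1: "inverse (real (Suc n)) < (\<epsilon>/2)^2" using N(2) by linarith
    have "cnorm L \<le> cnorm (X n) + cnorm (L - X n)" using cnorm_triangle[of "X n" "L - X n"] by simp
    also have "cnorm (X n) \<le> sqrt (d + inverse (real (Suc n)))"
      using X(2)[of n] by (simp add: cnorm_qn)
    also have "\<dots> \<le> sqrt d + sqrt (inverse (real (Suc n)))" using d0 by (simp add: sqrt_add_le_add_sqrt)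
    also have "sqrt (inverse (real (Suc n))) < sqrt ((\<epsilon>/2)^2)" using i1 by (simp only: real_sqrt_less_iff)
    also have "sqrt ((\<epsilon>/2)^2) = \<epsilon>/2" using ep by simp
    finally have "cnorm L < sqrt d + \<epsilon>" using c1 by linarith
    thus False by (simp add: \<epsilon>_def cnorm_qn)
  qed
  have LA: "L \<in> A" using gL by (simp add: A_def)
  have Lmin: "qn L \<le> qn x" if "x \<in> A" for x using qL d_le[OF that] by simp
  have orth: "cinner L m = 0" if gm: "g m = 0" for m
  proof -
    define b where "b = cinner L m"
    define s where "s = 1 / (qn m + 1)"
    have sp: "s > 0" using qn_ge0[of m] by (simp add: s_def)
    have sq: "s * qn m < 1" using qn_ge0[of m] by (simp add: s_def field_simps)
    define t where "t = - of_real s * cnj b"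
    define B where "B = (cmod b)^2"
    have "L + t *\<^sub>C m \<in> A" using gL gm by (simp add: A_def add scal)
    hence "qn L \<le> qn (L + t *\<^sub>C m)" by (rule Lmin)
    also have "\<dots> = qn L + 2 * Re (t * b) + (cmod t)^2 * qn m" by (simp add: qn_expand b_def)
    also have "t * b = - of_real (s * B)"
    proof -
      have n: "cnj b * b = of_real B" unfolding B_def by (metis complex_norm_square mult.commute)
      have "t * b = - (of_real s * (cnj b * b))" by (simp add: t_def)
      also have "\<dots> = - of_real (s * B)" by (simp only: n of_real_mult)
      finally show ?thesis .
    qed
    also have "(cmod t)^2 = s^2 * B" using sp by (simp add: t_def B_def norm_mult power_mult_distrib)
    finally have h: "0 \<le> - 2 * (s * B) + s^2 * B * qn m" by simp
    have "- 2 * (s * B) + s^2 * B * qn m = (s * B) * (s * qn m - 2)" by (simp add: power2_eq_square algebra_simps)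
    with h have h2: "0 \<le> (s * B) * (s * qn m - 2)" by simp
    have B0: "B = 0"
    proof (rule ccontr)
      assume "B \<noteq> 0"
      hence "B > 0" by (simp add: B_def)
      hence "(s * B) * (s * qn m - 2) < 0" using sp sq by (intro mult_pos_neg) auto
      with h2 show False by simp
    qed
    thus ?thesis by (simp add: b_def B_def)
  qed
  have Ln: "L \<noteq> 0" using gL g0 by auto
  have L0: "cinner L L \<noteq> 0" using cinner_eq_zero_iff[of L] Ln by blast
  show ?thesis
  proof (intro exI allI)
    fix x
    have "g (x - g x *\<^sub>C L) = 0" using gL by (simp add: gdiff scal)
    hence "cinner L (x - g x *\<^sub>C L) = 0" by (rule orth)
    hence e: "cinner L x = g x * cinner L L" by (simp add: cinner_diff_right cinner_scaleC_right)
    show "g x = cinner (cnj (inverse (cinner L L)) *\<^sub>C L) x"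
      using L0 by (simp add: cinner_scaleC_left e)
  qed
qed


lemma cinner_ext: "(\<And>x. cinner x u = cinner x v) \<Longrightarrow> u = (v::'a::chilbert)"
proof -
  assume h: "\<And>x. cinner x u = cinner x v"
  have "cinner (u - v) (u - v) = 0" using h[of "u - v"] by (simp add: cinner_diff_right)
  thus ?thesis using cinner_eq_zero_iff[of "u - v"] by simp
qed

lemma bounded_opD:
  assumes "bounded_op T"
  shows "T (x + y) = T x + T y" "T (a *\<^sub>C x) = a *\<^sub>C T x" "\<exists>K\<ge>0. \<forall>x. cnorm (T x) \<le> K * cnorm x"
proof -
  show "T (x + y) = T x + T y" "T (a *\<^sub>C x) = a *\<^sub>C T x" using assms by (auto simp: bounded_op_def)
  obtain K where K: "\<forall>x. cnorm (T x) \<le> K * cnorm x" using assms by (auto simp: bounded_op_def)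
  have "\<forall>x. cnorm (T x) \<le> \<bar>K\<bar> * cnorm x"
    using K cnorm_ge0 by (meson abs_ge_self mult_right_mono order_trans)
  thus "\<exists>K\<ge>0. \<forall>x. cnorm (T x) \<le> K * cnorm x" by (intro exI[of _ "\<bar>K\<bar>"]) simp
qed

lemma adjoint_exists:
  assumes T: "bounded_op (T::'a::chilbert \<Rightarrow> 'a)"
  shows "\<exists>S. \<forall>x y. cinner (T x) y = cinner x (S y)"
proof -
  obtain K where K: "K \<ge> 0" "\<And>x. cnorm (T x) \<le> K * cnorm x" using bounded_opD(3)[OF T] by auto
  have "\<exists>z. \<forall>x. cinner y (T x) = cinner z x" for y
  proof (rule riesz[where K = "cnorm y * K"])
    show "cinner y (T (x1 + x2)) = cinner y (T x1) + cinner y (T x2)" for x1 x2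
      by (simp add: bounded_opD(1)[OF T] cinner_add_right)
    show "cinner y (T (a *\<^sub>C x)) = a * cinner y (T x)" for a x
      by (simp add: bounded_opD(2)[OF T] cinner_scaleC_right)
    show "cmod (cinner y (T x)) \<le> cnorm y * K * cnorm x" for x
    proof -
      have "cmod (cinner y (T x)) \<le> cnorm y * cnorm (T x)" by (rule cs_norm)
      also have "\<dots> \<le> cnorm y * (K * cnorm x)" by (intro mult_left_mono K(2) cnorm_ge0)
      finally show ?thesis by (simp add: mult.assoc)
    qed
  qed
  then obtain S where S: "\<And>y x. cinner y (T x) = cinner (S y) x" by metis
  show ?thesis
  proof (intro exI allI)
    fix x y
    show "cinner (T x) y = cinner x (S y)" by (metis S cinner_commute)
  qed
qed

lemma adjoint_prop:
  assumes T: "bounded_op (T::'a::chilbert \<Rightarrow> 'a)"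
  shows "cinner (T x) y = cinner x (adjoint T y)"
proof -
  obtain S where S: "\<forall>x y. cinner (T x) y = cinner x (S y)" using adjoint_exists[OF T] by blast
  have "\<exists>!S. \<forall>x y. cinner (T x) y = cinner x (S y)"
  proof (rule ex1I[of _ S])
    show "\<forall>x y. cinner (T x) y = cinner x (S y)" by (rule S)
    fix S' assume h: "\<forall>x y. cinner (T x) y = cinner x (S' y)"
    show "S' = S" by (rule ext, rule cinner_ext) (metis S h)
  qed
  from theI'[OF this] show ?thesis unfolding adjoint_def by blast
qed

lemma adjoint_unique:
  assumes T: "bounded_op (T::'a::chilbert \<Rightarrow> 'a)" and h: "\<And>x y. cinner (T x) y = cinner x (S y)"
  shows "adjoint T = S"
  by (rule ext, rule cinner_ext) (metis adjoint_prop[OF T] h)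

lemma adjoint_bounded:
  assumes T: "bounded_op (T::'a::chilbert \<Rightarrow> 'a)"
  shows "bounded_op (adjoint T)"
proof -
  let ?S = "adjoint T"
  obtain K where K: "K \<ge> 0" "\<And>x. cnorm (T x) \<le> K * cnorm x" using bounded_opD(3)[OF T] by auto
  have a: "?S (x + y) = ?S x + ?S y" for x y
    by (rule cinner_ext) (simp add: adjoint_prop[OF T, symmetric] cinner_add_right)
  have b: "?S (a *\<^sub>C x) = a *\<^sub>C ?S x" for a x
    by (rule cinner_ext) (simp add: adjoint_prop[OF T, symmetric] cinner_scaleC_right)
  have c: "cnorm (?S y) \<le> K * cnorm y" for y
  proof -
    have "(cnorm (?S y))^2 = qn (?S y)" by (simp add: cnorm_qn qn_ge0)
    also have "\<dots> \<le> cmod (cinner (?S y) (?S y))" by (simp add: qn_def complex_Re_le_cmod)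
    also have "cinner (?S y) (?S y) = cinner (T (?S y)) y" by (simp add: adjoint_prop[OF T])
    also have "cmod \<dots> \<le> cnorm (T (?S y)) * cnorm y" by (rule cs_norm)
    also have "\<dots> \<le> K * cnorm (?S y) * cnorm y" by (intro mult_right_mono K(2) cnorm_ge0)
    finally have h: "cnorm (?S y) * cnorm (?S y) \<le> cnorm (?S y) * (K * cnorm y)"
      by (simp add: power2_eq_square mult_ac)
    show ?thesis
    proof (cases "cnorm (?S y) = 0")
      case True thus ?thesis using K(1) cnorm_ge0[of y] by simp
    next
      case False
      hence "cnorm (?S y) > 0" using cnorm_ge0 by (simp add: order_less_le)
      with h show ?thesis by simp
    qed
  qed
  show ?thesis unfolding bounded_op_def using a b c by blast
qed

lemma bounded_add: "bounded_op S \<Longrightarrow> bounded_op T \<Longrightarrow> bounded_op (\<lambda>x. S x + T x :: 'a::chilbert)"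
proof -
  assume S: "bounded_op S" and T: "bounded_op T"
  obtain K1 where K1: "\<And>x. cnorm (S x) \<le> K1 * cnorm x" using bounded_opD(3)[OF S] by auto
  obtain K2 where K2: "\<And>x. cnorm (T x) \<le> K2 * cnorm x" using bounded_opD(3)[OF T] by auto
  have "cnorm (S x + T x) \<le> (K1 + K2) * cnorm x" for x
    using cnorm_triangle[of "S x" "T x"] K1[of x] K2[of x] by (simp add: distrib_right)
  thus ?thesis unfolding bounded_op_def
    using bounded_opD(1,2)[OF S] bounded_opD(1,2)[OF T]
    by (auto simp: scaleC_add_right add_ac)
qed

lemma bounded_scale: "bounded_op T \<Longrightarrow> bounded_op (\<lambda>x. c *\<^sub>C T x :: 'a::chilbert)"
proof -
  assume T: "bounded_op T"
  obtain K where K: "K \<ge> 0" "\<And>x. cnorm (T x) \<le> K * cnorm x" using bounded_opD(3)[OF T] by auto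
  have "cnorm (c *\<^sub>C T x) \<le> (cmod c * K) * cnorm x" for x
    using K(2)[of x] by (simp add: cnorm_scale mult.assoc mult_left_mono)
  hence "\<exists>K. \<forall>x. cnorm (c *\<^sub>C T x) \<le> K * cnorm x" by blast
  thus ?thesis unfolding bounded_op_def
    using bounded_opD(1,2)[OF T]
    by (auto simp: scaleC_add_right scaleC_scaleC mult.commute)
qed

lemma bounded_zero: "bounded_op (\<lambda>x. 0 :: 'a::chilbert)"
  unfolding bounded_op_def by (auto simp: cnorm_def intro: exI[of _ 0])

lemma adjoint_add:
  assumes S: "bounded_op S" and T: "bounded_op (T::'a::chilbert \<Rightarrow> 'a)"
  shows "adjoint (\<lambda>x. S x + T x) = (\<lambda>y. adjoint S y + adjoint T y)"
  by (rule adjoint_unique[OF bounded_add[OF S T]])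
     (simp add: cinner_add_left cinner_add_right adjoint_prop[OF S] adjoint_prop[OF T])

lemma adjoint_scale:
  assumes T: "bounded_op (T::'a::chilbert \<Rightarrow> 'a)"
  shows "adjoint (\<lambda>x. c *\<^sub>C T x) = (\<lambda>y. cnj c *\<^sub>C adjoint T y)"
  by (rule adjoint_unique[OF bounded_scale[OF T]])
     (simp add: cinner_scaleC_left cinner_scaleC_right adjoint_prop[OF T])

lemma adjoint_zero: "adjoint (\<lambda>x. 0 :: 'a::chilbert) = (\<lambda>x. 0)"
  by (rule adjoint_unique[OF bounded_zero]) simp

lemma opRe_bounded: "bounded_op T \<Longrightarrow> bounded_op (op_Re (T::'a::chilbert \<Rightarrow> 'a))"
  unfolding op_Re_def by (intro bounded_scale bounded_add adjoint_bounded)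

lemma opRe_add:
  assumes S: "bounded_op S" and T: "bounded_op (T::'a::chilbert \<Rightarrow> 'a)"
  shows "op_Re (\<lambda>x. S x + T x) = (\<lambda>x. op_Re S x + op_Re T x)"
  unfolding op_Re_def adjoint_add[OF S T] by (simp add: scaleC_add_right add_ac)

lemma opRe_scale_real:
  assumes T: "bounded_op (T::'a::chilbert \<Rightarrow> 'a)"
  shows "op_Re (\<lambda>x. complex_of_real r *\<^sub>C T x) = (\<lambda>x. complex_of_real r *\<^sub>C op_Re T x)"
  unfolding op_Re_def adjoint_scale[OF T] by (simp add: scaleC_add_right scaleC_scaleC mult.commute)

lemma opRe_zero: "op_Re (\<lambda>x. 0 :: 'a::chilbert) = (\<lambda>x. 0)"
  unfolding op_Re_def adjoint_zero by simp


definition elt :: "(('a::chilbert \<Rightarrow> 'a) \<Rightarrow> real) \<Rightarrow> ('a \<Rightarrow> 'a) \<Rightarrow> ('a \<Rightarrow> 'a) \<Rightarrow> complex \<Rightarrow> complex \<Rightarrow> real \<Rightarrow> real"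
  where "elt N B C l1 l2 \<theta> = N (op_Re (\<lambda>x. exp (\<i> * of_real \<theta>) *\<^sub>C (l1 *\<^sub>C B x + l2 *\<^sub>C C x)))"

lemma wNe_set_eq: "wNe_set N B C = {elt N B C l1 l2 \<theta> | l1 l2 \<theta>. (cmod l1)\<^sup>2 + (cmod l2)\<^sup>2 \<le> 1}"
  by (simp add: wNe_set_def elt_def)

lemma elt_in: "(cmod l1)\<^sup>2 + (cmod l2)\<^sup>2 \<le> 1 \<Longrightarrow> elt N B C l1 l2 \<theta> \<in> wNe_set N B C"
  unfolding wNe_set_eq by blast

lemma wNe_set_ne: "wNe_set N B C \<noteq> {}"
  using elt_in[of 0 0 N B C 0] by auto

lemma lin_bounded: "bounded_op B \<Longrightarrow> bounded_op C \<Longrightarrow> bounded_op (\<lambda>x. u *\<^sub>C B x + v *\<^sub>C C x :: 'a::chilbert)"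
  by (intro bounded_add bounded_scale)

lemma E_eq: "(\<lambda>x. e *\<^sub>C (l1 *\<^sub>C B x + l2 *\<^sub>C C x)) = (\<lambda>x. (e * l1) *\<^sub>C B x + (e * l2) *\<^sub>C (C x :: 'a::chilbert))"
  by (simp add: scaleC_add_right scaleC_scaleC)

locale opnorm =
  fixes N :: "('h::chilbert \<Rightarrow> 'h) \<Rightarrow> real"
  assumes isn: "is_op_norm N"
begin

lemma Npos: "bounded_op T \<Longrightarrow> 0 \<le> N T" using isn by (simp add: is_op_norm_def)
lemma Nzero: "bounded_op T \<Longrightarrow> N T = 0 \<longleftrightarrow> T = (\<lambda>x. 0)" using isn by (simp add: is_op_norm_def)
lemma Nscale: "bounded_op T \<Longrightarrow> N (\<lambda>x. c *\<^sub>C T x) = cmod c * N T" using isn by (simp add: is_op_norm_def)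
lemma Ntri: "bounded_op S \<Longrightarrow> bounded_op T \<Longrightarrow> N (\<lambda>x. S x + T x) \<le> N S + N T"
  using isn by (simp add: is_op_norm_def)

lemma N_lin_le:
  assumes B: "bounded_op B" and C: "bounded_op C" and u: "cmod u \<le> 1" and v: "cmod v \<le> 1"
  shows "N (\<lambda>x. u *\<^sub>C B x + v *\<^sub>C C x) \<le> N B + N C"
proof -
  have "N (\<lambda>x. u *\<^sub>C B x + v *\<^sub>C C x) \<le> N (\<lambda>x. u *\<^sub>C B x) + N (\<lambda>x. v *\<^sub>C C x)"
    by (rule Ntri) (intro bounded_scale B, intro bounded_scale C)
  also have "\<dots> = cmod u * N B + cmod v * N C" by (simp add: Nscale B C)
  also have "\<dots> \<le> 1 * N B + 1 * N C"
    by (intro add_mono mult_right_mono u v Npos B C)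
  finally show ?thesis by simp
qed

lemma N_opRe_le:
  assumes T: "bounded_op T"
  shows "N (op_Re T) \<le> N T + N (adjoint T)"
proof -
  have "N (op_Re T) = cmod (1/2) * N (\<lambda>x. T x + adjoint T x)"
    unfolding op_Re_def by (rule Nscale) (intro bounded_add T adjoint_bounded)
  also have "\<dots> \<le> N (\<lambda>x. T x + adjoint T x)"
    using Npos[OF bounded_add[OF T adjoint_bounded[OF T]]] by simp
  also have "\<dots> \<le> N T + N (adjoint T)" by (intro Ntri T adjoint_bounded)
  finally show ?thesis .
qed

lemma elt_le:
  assumes B: "bounded_op B" and C: "bounded_op C" and l: "(cmod l1)\<^sup>2 + (cmod l2)\<^sup>2 \<le> 1"
  shows "elt N B C l1 l2 \<theta> \<le> N B + N C + (N (adjoint B) + N (adjoint C))"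
proof -
  define e where "e = exp (\<i> * of_real \<theta>)"
  have ce: "cmod e = 1" by (simp add: e_def)
  have l1: "cmod l1 \<le> 1"
  proof -
    have "(cmod l1)^2 \<le> 1" using l zero_le_power2[of "cmod l2"] by linarith
    hence "(cmod l1)^2 \<le> 1^2" by simp
    thus ?thesis by (rule power2_le_imp_le) simp
  qed
  have l2: "cmod l2 \<le> 1"
  proof -
    have "(cmod l2)^2 \<le> 1" using l zero_le_power2[of "cmod l1"] by linarith
    hence "(cmod l2)^2 \<le> 1^2" by simp
    thus ?thesis by (rule power2_le_imp_le) simp
  qed
  define u where "u = e * l1"
  define v where "v = e * l2"
  have u: "cmod u \<le> 1" using l1 ce by (simp add: u_def norm_mult)
  have v: "cmod v \<le> 1" using l2 ce by (simp add: v_def norm_mult)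
  define E where "E = (\<lambda>x. u *\<^sub>C B x + v *\<^sub>C C x)"
  have Eb: "bounded_op E" unfolding E_def by (intro lin_bounded B C)
  have el: "elt N B C l1 l2 \<theta> = N (op_Re E)" by (simp add: elt_def E_eq E_def u_def v_def e_def)
  have adj: "adjoint E = (\<lambda>x. cnj u *\<^sub>C adjoint B x + cnj v *\<^sub>C adjoint C x)"
    unfolding E_def
    by (simp add: adjoint_add bounded_scale B C adjoint_scale)
  have "N (op_Re E) \<le> N E + N (adjoint E)" by (rule N_opRe_le[OF Eb])
  also have "N E \<le> N B + N C" unfolding E_def by (rule N_lin_le[OF B C u v])
  also have "N (adjoint E) \<le> N (adjoint B) + N (adjoint C)"
    unfolding adj by (rule N_lin_le) (use adjoint_bounded B C u v in auto)
  finally show ?thesis using el by simp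
qed

lemma bdd:
  assumes B: "bounded_op B" and C: "bounded_op C"
  shows "bdd_above (wNe_set N B C)"
  unfolding wNe_set_eq bdd_above_def using elt_le[OF B C] by blast

lemma elt_ge0:
  assumes B: "bounded_op B" and C: "bounded_op C"
  shows "0 \<le> elt N B C l1 l2 \<theta>"
  unfolding elt_def by (intro Npos opRe_bounded bounded_scale lin_bounded B C)

lemma wNe_ge0:
  assumes B: "bounded_op B" and C: "bounded_op C"
  shows "0 \<le> wNe N B C"
proof -
  have "elt N B C 0 0 0 \<le> wNe N B C" unfolding wNe_def
    by (rule cSup_upper[OF elt_in bdd[OF B C]]) simp
  thus ?thesis using elt_ge0[OF B C, of 0 0 0] by simp
qed

lemma elt_le_wNe:
  assumes B: "bounded_op B" and C: "bounded_op C" and l: "(cmod l1)\<^sup>2 + (cmod l2)\<^sup>2 \<le> 1"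
  shows "elt N B C l1 l2 \<theta> \<le> wNe N B C"
  unfolding wNe_def by (rule cSup_upper[OF elt_in[OF l] bdd[OF B C]])

lemma opRe_zero_imp:
  assumes T: "bounded_op (T::'h \<Rightarrow> 'h)" and h1: "op_Re T = (\<lambda>x. 0)" and h2: "op_Re (\<lambda>x. \<i> *\<^sub>C T x) = (\<lambda>x. 0)"
  shows "T = (\<lambda>x. 0)"
proof
  fix x
  have "(1/2) *\<^sub>C (T x + adjoint T x) = 0" using fun_cong[OF h1, of x] by (simp add: op_Re_def)
  hence a: "T x + adjoint T x = 0" by (simp add: scaleC_eq_0)
  have "(1/2) *\<^sub>C (\<i> *\<^sub>C T x + cnj \<i> *\<^sub>C adjoint T x) = 0"
    using fun_cong[OF h2, of x] by (simp add: op_Re_def adjoint_scale[OF T])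
  hence b: "\<i> *\<^sub>C T x + (- \<i>) *\<^sub>C adjoint T x = 0" by (simp add: scaleC_eq_0)
  have c: "adjoint T x = - T x" using a by (simp add: eq_neg_iff_add_eq_0 add.commute)
  have "(\<i> + \<i>) *\<^sub>C T x = \<i> *\<^sub>C T x + (- \<i>) *\<^sub>C adjoint T x"
    unfolding c scaleC_add_left scaleC_minus_left scaleC_minus_right by simp
  also have "\<dots> = 0" by (rule b)
  finally show "T x = 0" by (simp add: scaleC_eq_0)
qed

lemma elt_special:
  shows "elt N B C 1 0 0 = N (op_Re B)" "elt N B C 1 0 (pi/2) = N (op_Re (\<lambda>x. \<i> *\<^sub>C B x))"
    "elt N B C 0 1 0 = N (op_Re C)" "elt N B C 0 1 (pi/2) = N (op_Re (\<lambda>x. \<i> *\<^sub>C C x))"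
proof -
  have ei: "exp (\<i> * complex_of_real (pi / 2)) = \<i>" by (metis cis_conv_exp cis_pi_half)
  show "elt N B C 1 0 0 = N (op_Re B)" "elt N B C 1 0 (pi/2) = N (op_Re (\<lambda>x. \<i> *\<^sub>C B x))"
    "elt N B C 0 1 0 = N (op_Re C)" "elt N B C 0 1 (pi/2) = N (op_Re (\<lambda>x. \<i> *\<^sub>C C x))"
    using ei by (simp_all add: elt_def scaleC_one)
qed

lemma definite:
  assumes B: "bounded_op B" and C: "bounded_op C"
  shows "wNe N B C = 0 \<longleftrightarrow> B = (\<lambda>x. 0) \<and> C = (\<lambda>x. 0)"
proof
  assume w: "wNe N B C = 0"
  have z: "elt N B C l1 l2 \<theta> = 0" if "(cmod l1)\<^sup>2 + (cmod l2)\<^sup>2 \<le> 1" for l1 l2 \<theta>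
    using elt_le_wNe[OF B C that] elt_ge0[OF B C] w by (simp add: order_antisym)
  have "N (op_Re B) = 0" using z[of 1 0 0] elt_special(1) by simp
  hence 1: "op_Re B = (\<lambda>x. 0)" using Nzero opRe_bounded B by blast
  have "N (op_Re (\<lambda>x. \<i> *\<^sub>C B x)) = 0" using z[of 1 0 "pi/2"] elt_special(2) by simp
  hence 2: "op_Re (\<lambda>x. \<i> *\<^sub>C B x) = (\<lambda>x. 0)" using Nzero opRe_bounded bounded_scale B by blast
  have "N (op_Re C) = 0" using z[of 0 1 0] elt_special(3) by simp
  hence 3: "op_Re C = (\<lambda>x. 0)" using Nzero opRe_bounded C by blast
  have "N (op_Re (\<lambda>x. \<i> *\<^sub>C C x)) = 0" using z[of 0 1 "pi/2"] elt_special(4) by simp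
  hence 4: "op_Re (\<lambda>x. \<i> *\<^sub>C C x) = (\<lambda>x. 0)" using Nzero opRe_bounded bounded_scale C by blast
  show "B = (\<lambda>x. 0) \<and> C = (\<lambda>x. 0)" using opRe_zero_imp[OF B 1 2] opRe_zero_imp[OF C 3 4] by simp
next
  assume "B = (\<lambda>x. 0) \<and> C = (\<lambda>x. 0)"
  hence BC: "B = (\<lambda>x. 0)" "C = (\<lambda>x. 0)" by auto
  have "elt N B C l1 l2 \<theta> = 0" for l1 l2 \<theta>
    using Nzero[OF bounded_zero] by (simp add: elt_def BC opRe_zero)
  hence "wNe_set N B C = {0}" using wNe_set_ne[of N B C] unfolding wNe_set_eq by auto
  thus "wNe N B C = 0" by (simp add: wNe_def)
qed

lemma elt_scale:
  assumes B: "bounded_op B" and C: "bounded_op C" and r: "0 \<le> r"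
    and c: "c = complex_of_real r * exp (\<i> * complex_of_real \<phi>)"
  shows "elt N (\<lambda>x. c *\<^sub>C B x) (\<lambda>x. c *\<^sub>C C x) l1 l2 \<theta> = r * elt N B C l1 l2 (\<theta> + \<phi>)"
proof -
  define E where "E = (\<lambda>x. exp (\<i> * complex_of_real (\<theta> + \<phi>)) *\<^sub>C (l1 *\<^sub>C B x + l2 *\<^sub>C C x))"
  have Eb: "bounded_op E" unfolding E_def by (intro bounded_scale lin_bounded B C)
  have ex: "exp (\<i> * complex_of_real (\<theta> + \<phi>)) = exp (\<i> * complex_of_real \<theta>) * exp (\<i> * complex_of_real \<phi>)"
    by (simp add: distrib_left exp_add)
  have k1: "exp (\<i> * complex_of_real \<theta>) * (l1 * c) = complex_of_real r * (exp (\<i> * complex_of_real (\<theta> + \<phi>)) * l1)"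
    unfolding ex c by (simp add: mult_ac)
  have k2: "exp (\<i> * complex_of_real \<theta>) * (l2 * c) = complex_of_real r * (exp (\<i> * complex_of_real (\<theta> + \<phi>)) * l2)"
    unfolding ex c by (simp add: mult_ac)
  have op: "(\<lambda>x. exp (\<i> * complex_of_real \<theta>) *\<^sub>C (l1 *\<^sub>C (c *\<^sub>C B x) + l2 *\<^sub>C (c *\<^sub>C C x)))
      = (\<lambda>x. complex_of_real r *\<^sub>C E x)"
    unfolding E_def by (rule ext) (simp only: scaleC_add_right scaleC_scaleC k1 k2)
  have "elt N (\<lambda>x. c *\<^sub>C B x) (\<lambda>x. c *\<^sub>C C x) l1 l2 \<theta> = N (op_Re (\<lambda>x. complex_of_real r *\<^sub>C E x))"
    unfolding elt_def op ..
  also have "\<dots> = N (\<lambda>x. complex_of_real r *\<^sub>C op_Re E x)" by (simp only: opRe_scale_real[OF Eb])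
  also have "\<dots> = cmod (complex_of_real r) * N (op_Re E)" by (rule Nscale[OF opRe_bounded[OF Eb]])
  also have "\<dots> = r * elt N B C l1 l2 (\<theta> + \<phi>)" using r by (simp add: elt_def E_def)
  finally show ?thesis .
qed

lemma sup_scale:
  fixes S :: "real set" assumes ne: "S \<noteq> {}" and bd: "bdd_above S" and r: "0 \<le> r"
  shows "Sup ((\<lambda>z. r * z) ` S) = r * Sup S"
proof (cases "r = 0")
  case True
  hence "(\<lambda>z. r * z) ` S = {0}" using ne by auto
  thus ?thesis using True by simp
next
  case False
  hence rp: "r > 0" using r by simp
  obtain M where M: "\<And>x. x \<in> S \<Longrightarrow> x \<le> M" using bd unfolding bdd_above_def by auto
  have bd2: "bdd_above ((\<lambda>z. r * z) ` S)" unfolding bdd_above_def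
    using M r by (auto intro!: exI[of _ "r * M"] mult_left_mono)
  show ?thesis
  proof (rule antisym)
    show "Sup ((\<lambda>z. r * z) ` S) \<le> r * Sup S"
      using ne by (intro cSup_least) (auto intro!: mult_left_mono cSup_upper bd r)
    have "Sup S \<le> Sup ((\<lambda>z. r * z) ` S) / r"
      using ne
    proof (intro cSup_least)
      fix x assume "x \<in> S"
      hence "r * x \<le> Sup ((\<lambda>z. r * z) ` S)" by (intro cSup_upper imageI bd2)
      thus "x \<le> Sup ((\<lambda>z. r * z) ` S) / r" using rp by (simp add: field_simps)
    qed
    thus "r * Sup S \<le> Sup ((\<lambda>z. r * z) ` S)" using rp by (simp add: field_simps)
  qed
qed

lemma wNe_scale:
  assumes B: "bounded_op B" and C: "bounded_op C"
  shows "wNe N (\<lambda>x. c *\<^sub>C B x) (\<lambda>x. c *\<^sub>C C x) = cmod c * wNe N B C"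
proof -
  define r where "r = cmod c"
  define \<phi> where "\<phi> = Arg c"
  have r: "0 \<le> r" by (simp add: r_def)
  have c: "c = complex_of_real r * exp (\<i> * complex_of_real \<phi>)"
    unfolding r_def \<phi>_def by (metis rcis_cmod_Arg rcis_def cis_conv_exp)
  have "wNe_set N (\<lambda>x. c *\<^sub>C B x) (\<lambda>x. c *\<^sub>C C x) = (\<lambda>z. r * z) ` wNe_set N B C"
  proof
    show "wNe_set N (\<lambda>x. c *\<^sub>C B x) (\<lambda>x. c *\<^sub>C C x) \<subseteq> (\<lambda>z. r * z) ` wNe_set N B C"
    proof
      fix z assume "z \<in> wNe_set N (\<lambda>x. c *\<^sub>C B x) (\<lambda>x. c *\<^sub>C C x)"
      then obtain l1 l2 \<theta> where l: "(cmod l1)\<^sup>2 + (cmod l2)\<^sup>2 \<le> 1"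
        and z: "z = elt N (\<lambda>x. c *\<^sub>C B x) (\<lambda>x. c *\<^sub>C C x) l1 l2 \<theta>" unfolding wNe_set_eq by blast
      have "z = r * elt N B C l1 l2 (\<theta> + \<phi>)" unfolding z by (rule elt_scale[OF B C r c])
      thus "z \<in> (\<lambda>z. r * z) ` wNe_set N B C" using elt_in[OF l] by blast
    qed
    show "(\<lambda>z. r * z) ` wNe_set N B C \<subseteq> wNe_set N (\<lambda>x. c *\<^sub>C B x) (\<lambda>x. c *\<^sub>C C x)"
    proof
      fix z assume "z \<in> (\<lambda>z. r * z) ` wNe_set N B C"
      then obtain l1 l2 \<theta> where l: "(cmod l1)\<^sup>2 + (cmod l2)\<^sup>2 \<le> 1"
        and z: "z = r * elt N B C l1 l2 \<theta>" unfolding wNe_set_eq by blast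
      have "z = elt N (\<lambda>x. c *\<^sub>C B x) (\<lambda>x. c *\<^sub>C C x) l1 l2 (\<theta> - \<phi>)"
        unfolding z elt_scale[OF B C r c] by simp
      thus "z \<in> wNe_set N (\<lambda>x. c *\<^sub>C B x) (\<lambda>x. c *\<^sub>C C x)" using elt_in[OF l] by blast
    qed
  qed
  hence "wNe N (\<lambda>x. c *\<^sub>C B x) (\<lambda>x. c *\<^sub>C C x) = Sup ((\<lambda>z. r * z) ` wNe_set N B C)"
    by (simp add: wNe_def)
  also have "\<dots> = r * wNe N B C" unfolding wNe_def by (rule sup_scale[OF wNe_set_ne bdd[OF B C] r])
  finally show ?thesis by (simp add: r_def)
qed

lemma elt_add:
  assumes B: "bounded_op B" and C: "bounded_op C" and B': "bounded_op B'" and C': "bounded_op C'"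
  shows "elt N (\<lambda>x. B x + B' x) (\<lambda>x. C x + C' x) l1 l2 \<theta> \<le> elt N B C l1 l2 \<theta> + elt N B' C' l1 l2 \<theta>"
proof -
  define e where "e = exp (\<i> * complex_of_real \<theta>)"
  define E where "E = (\<lambda>x. e *\<^sub>C (l1 *\<^sub>C B x + l2 *\<^sub>C C x))"
  define E' where "E' = (\<lambda>x. e *\<^sub>C (l1 *\<^sub>C B' x + l2 *\<^sub>C C' x))"
  have Eb: "bounded_op E" unfolding E_def by (intro bounded_scale lin_bounded B C)
  have Eb': "bounded_op E'" unfolding E'_def by (intro bounded_scale lin_bounded B' C')
  have op: "(\<lambda>x. e *\<^sub>C (l1 *\<^sub>C (B x + B' x) + l2 *\<^sub>C (C x + C' x))) = (\<lambda>x. E x + E' x)"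
    unfolding E_def E'_def by (rule ext) (simp add: scaleC_add_right add_ac)
  have "elt N (\<lambda>x. B x + B' x) (\<lambda>x. C x + C' x) l1 l2 \<theta> = N (op_Re (\<lambda>x. E x + E' x))"
    unfolding elt_def e_def[symmetric] op ..
  also have "\<dots> = N (\<lambda>x. op_Re E x + op_Re E' x)" by (simp only: opRe_add[OF Eb Eb'])
  also have "\<dots> \<le> N (op_Re E) + N (op_Re E')" by (intro Ntri opRe_bounded Eb Eb')
  also have "\<dots> = elt N B C l1 l2 \<theta> + elt N B' C' l1 l2 \<theta>" by (simp add: elt_def E_def E'_def e_def)
  finally show ?thesis .
qed

lemma wNe_tri:
  assumes B: "bounded_op B" and C: "bounded_op C" and B': "bounded_op B'" and C': "bounded_op C'"
  shows "wNe N (\<lambda>x. B x + B' x) (\<lambda>x. C x + C' x) \<le> wNe N B C + wNe N B' C'"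
  unfolding wNe_def[of N "\<lambda>x. B x + B' x"]
proof (rule cSup_least[OF wNe_set_ne])
  fix z assume "z \<in> wNe_set N (\<lambda>x. B x + B' x) (\<lambda>x. C x + C' x)"
  then obtain l1 l2 \<theta> where l: "(cmod l1)\<^sup>2 + (cmod l2)\<^sup>2 \<le> 1"
    and z: "z = elt N (\<lambda>x. B x + B' x) (\<lambda>x. C x + C' x) l1 l2 \<theta>" unfolding wNe_set_eq by blast
  have "z \<le> elt N B C l1 l2 \<theta> + elt N B' C' l1 l2 \<theta>" unfolding z by (rule elt_add[OF B C B' C'])
  also have "\<dots> \<le> wNe N B C + wNe N B' C'" using elt_le_wNe[OF B C l] elt_le_wNe[OF B' C' l] by (rule add_mono)
  finally show "z \<le> wNe N B C + wNe N B' C'" .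
qed

end

theorem theorem2p2:
  fixes N :: "('h::chilbert \<Rightarrow> 'h) \<Rightarrow> real"
  assumes "is_op_norm N"
  shows "(\<forall>B C. bounded_op B \<longrightarrow> bounded_op C \<longrightarrow>
            bdd_above (wNe_set N B C) \<and> 0 \<le> wNe N B C) \<and>
         (\<forall>B C. bounded_op B \<longrightarrow> bounded_op C \<longrightarrow>
            (wNe N B C = 0 \<longleftrightarrow> B = (\<lambda>x. 0) \<and> C = (\<lambda>x. 0))) \<and>
         (\<forall>c B C. bounded_op B \<longrightarrow> bounded_op C \<longrightarrow>
            wNe N (\<lambda>x. c *\<^sub>C B x) (\<lambda>x. c *\<^sub>C C x) = cmod c * wNe N B C) \<and>
         (\<forall>B C B' C'. bounded_op B \<longrightarrow> bounded_op C \<longrightarrow> bounded_op B' \<longrightarrow> bounded_op C' \<longrightarrow>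
            wNe N (\<lambda>x. B x + B' x) (\<lambda>x. C x + C' x) \<le> wNe N B C + wNe N B' C')"
proof -
  interpret opnorm N by (rule opnorm.intro[OF assms])
  have 1: "\<forall>B C. bounded_op B \<longrightarrow> bounded_op C \<longrightarrow>
            bdd_above (wNe_set N B C) \<and> 0 \<le> wNe N B C"
  proof (intro allI impI conjI)
    fix B C :: "'h \<Rightarrow> 'h" assume B: "bounded_op B" and C: "bounded_op C"
    show "bdd_above (wNe_set N B C)" by (rule bdd[OF B C])
    show "0 \<le> wNe N B C" by (rule wNe_ge0[OF B C])
  qed
  have 2: "\<forall>B C. bounded_op B \<longrightarrow> bounded_op C \<longrightarrow>
            (wNe N B C = 0 \<longleftrightarrow> B = (\<lambda>x. 0) \<and> C = (\<lambda>x. 0))"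
    using definite by blast
  have 3: "\<forall>c B C. bounded_op B \<longrightarrow> bounded_op C \<longrightarrow>
            wNe N (\<lambda>x. c *\<^sub>C B x) (\<lambda>x. c *\<^sub>C C x) = cmod c * wNe N B C"
    using wNe_scale by blast
  have 4: "\<forall>B C B' C'. bounded_op B \<longrightarrow> bounded_op C \<longrightarrow> bounded_op B' \<longrightarrow> bounded_op C' \<longrightarrow>
            wNe N (\<lambda>x. B x + B' x) (\<lambda>x. C x + C' x) \<le> wNe N B C + wNe N B' C'"
    using wNe_tri by blast
  show ?thesis by (intro conjI 1 2 3 4)
qed

end
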